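(* Let $q$ be a prime power and $\mathcal{L}$ a non-empty set of lines of $\mathrm{PG}(n,q)$ satisfying (Pt), (Pl), (Sd) and (To) (see context). Suppose $\mathcal{L}$ contains a pentagon with vertices $A,B,C,D,E$ (so $AB,BC,CD,DE,EA\in\mathcal{L}$), and let $U=\langle A,B,C,D,E\rangle$. Then the only $(q+1)$-$U$-points on the line $BE$ of $\mathrm{PG}(n,q)$ are $B$ and $E$.
   Context: (Pt): every point of $\mathrm{PG}(n,q)$ lies on $0$ or $q+1$ lines of $\mathcal{L}$. (Pl): every plane contains $0$, $1$ or $q+1$ lines of $\mathcal{L}$. (Sd): every solid ($3$-dimensional subspace) contains $0$, $1$, $q+1$ or $2q+1$ lines of $\mathcal{L}$. (To): $|\mathcal{L}|\le q^5+q^4+q^3+q^2+q+1$. A pentagon of $\mathcal{L}$ with vertices $A,B,C,D,E$ is a set of five pairwise distinct points such that the lines $AB,BC,CD,DE,EA$ all belong to $\mathcal{L}$ and are pairwise distinct. For a subspace $U$, a point $P$ is a $(q+1)$-$U$-point if exactly $q+1$ lines of $\mathcal{L}$ pass through $P$ and are contained in $U$. *)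

theory Defs
  imports "HOL-Analysis.Analysis"
begin

text \<open>PG(n,q) is modelled as the lattice of subspaces of the vector space
  'a^'n over a finite field 'a, with CARD('a) = q and CARD('n) = n+1.
  A projective subspace of projective dimension k is a vector subspace of
  vector-space dimension k+1.\<close>

definition pg_subspace :: "nat \<Rightarrow> ('a::field ^ 'n) set \<Rightarrow> bool" where
  "pg_subspace k S \<longleftrightarrow> vec.subspace S \<and> vec.dim S = k + 1"

abbreviation pg_point :: "('a::field ^ 'n) set \<Rightarrow> bool" where
  "pg_point P \<equiv> pg_subspace 0 P"
abbreviation pg_line :: "('a::field ^ 'n) set \<Rightarrow> bool" where
  "pg_line l \<equiv> pg_subspace 1 l"
abbreviation pg_plane :: "('a::field ^ 'n) set \<Rightarrow> bool" where
  "pg_plane p \<equiv> pg_subspace 2 p"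
abbreviation pg_solid :: "('a::field ^ 'n) set \<Rightarrow> bool" where
  "pg_solid s \<equiv> pg_subspace 3 s"

definition pg_join :: "('a::field ^ 'n) set list \<Rightarrow> ('a ^ 'n) set" where
  "pg_join Xs = vec.span (\<Union> (set Xs))"

definition cond_Pt :: "('a::{field,finite} ^ 'n) set set \<Rightarrow> bool" where
  "cond_Pt L \<longleftrightarrow> (\<forall>P. pg_point P \<longrightarrow>
     card {l \<in> L. P \<subseteq> l} \<in> {0, CARD('a) + 1})"

definition cond_Pl :: "('a::{field,finite} ^ 'n) set set \<Rightarrow> bool" where
  "cond_Pl L \<longleftrightarrow> (\<forall>\<pi>. pg_plane \<pi> \<longrightarrow>
     card {l \<in> L. l \<subseteq> \<pi>} \<in> {0, 1, CARD('a) + 1})"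

definition cond_Sd :: "('a::{field,finite} ^ 'n) set set \<Rightarrow> bool" where
  "cond_Sd L \<longleftrightarrow> (\<forall>S. pg_solid S \<longrightarrow>
     card {l \<in> L. l \<subseteq> S} \<in> {0, 1, CARD('a) + 1, 2 * CARD('a) + 1})"

definition cond_To :: "('a::{field,finite} ^ 'n) set set \<Rightarrow> bool" where
  "cond_To L \<longleftrightarrow> (let q = CARD('a) in card L \<le> q^5 + q^4 + q^3 + q^2 + q + 1)"

definition pentagon :: "('a::field ^ 'n) set set \<Rightarrow> ('a ^ 'n) set \<Rightarrow> ('a ^ 'n) set
    \<Rightarrow> ('a ^ 'n) set \<Rightarrow> ('a ^ 'n) set \<Rightarrow> ('a ^ 'n) set \<Rightarrow> bool" where
  "pentagon L A B C D E \<longleftrightarrow>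
     pg_point A \<and> pg_point B \<and> pg_point C \<and> pg_point D \<and> pg_point E \<and>
     distinct [A, B, C, D, E] \<and>
     set [pg_join [A,B], pg_join [B,C], pg_join [C,D], pg_join [D,E], pg_join [E,A]] \<subseteq> L \<and>
     distinct [pg_join [A,B], pg_join [B,C], pg_join [C,D], pg_join [D,E], pg_join [E,A]]"

definition qU_point :: "('a::{field,finite} ^ 'n) set set \<Rightarrow> ('a ^ 'n) set \<Rightarrow> ('a ^ 'n) set \<Rightarrow> bool" where
  "qU_point L U P \<longleftrightarrow> pg_point P \<and> card {l \<in> L. P \<subseteq> l \<and> l \<subseteq> U} = CARD('a) + 1"

end

theory Submission
  imports Defs "HOL-Library.FuncSet"
begin


lemma sub_eq:
  "vec.subspace S \<Longrightarrow> vec.subspace T \<Longrightarrow> S \<subseteq> T \<Longrightarrow> vec.dim T \<le> vec.dim S \<Longrightarrow> S = T"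
  by (rule vec.subspace_dim_equal) auto

lemma dim_join:
  assumes "vec.subspace S" "vec.subspace T"
  shows "vec.dim (vec.span (S \<union> T)) + vec.dim (S \<inter> T) = vec.dim S + vec.dim T"
proof -
  have sS: "vec.span S = S" "vec.span T = T" using assms by simp_all
  have "vec.span (S \<union> T) = {x + y |x y. x \<in> S \<and> y \<in> T}"
    by (simp add: vec.span_Un sS)
  then show ?thesis using vec.dim_sums_Int[OF assms] by simp
qed

lemma pgs: "pg_subspace k S \<Longrightarrow> vec.subspace S" "pg_subspace k S \<Longrightarrow> vec.dim S = k + 1"
  by (auto simp: pg_subspace_def)

lemma meet:
  assumes Y: "pg_subspace k Y" and Z: "pg_subspace k Z" and ne: "Y \<noteq> Z"
    and X: "vec.subspace X" "vec.dim X = k" "X \<subseteq> Y" "X \<subseteq> Z"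
  shows "Y \<inter> Z = X" "pg_subspace (Suc k) (vec.span (Y \<union> Z))"
proof -
  have sY: "vec.subspace Y" and sZ: "vec.subspace Z" using Y Z by (auto simp: pg_subspace_def)
  have sI: "vec.subspace (Y \<inter> Z)" using sY sZ by (rule vec.subspace_inter)
  have "vec.dim (Y \<inter> Z) \<le> k"
  proof (rule ccontr)
    assume "\<not> ?thesis"
    then have "vec.dim Y \<le> vec.dim (Y \<inter> Z)" "vec.dim Z \<le> vec.dim (Y \<inter> Z)" using Y Z by (auto simp: pg_subspace_def)
    then have "Y \<inter> Z = Y" "Y \<inter> Z = Z" using sub_eq[OF sI sY] sub_eq[OF sI sZ] by auto
    then show False using ne by auto
  qed
  then show eq: "Y \<inter> Z = X" using sub_eq[OF X(1) sI] X by auto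
  have "vec.dim (vec.span (Y \<union> Z)) = k + 2" using dim_join[OF sY sZ] eq X Y Z by (simp add: pg_subspace_def)
  then show "pg_subspace (Suc k) (vec.span (Y \<union> Z))" by (simp add: pg_subspace_def)
qed

lemma zero_sub: "vec.subspace {0}" "vec.dim {0} = 0"
  by (auto simp: vec.subspace_def)

lemma span_line:
  assumes "pg_point X" "pg_point Y" "X \<noteq> Y" shows "pg_line (vec.span (X \<union> Y))"
proof -
  have "{0} \<subseteq> X" "{0} \<subseteq> Y" using assms by (auto simp: pg_subspace_def vec.subspace_0)
  then show ?thesis using meet(2)[OF assms(1,2,3) zero_sub] by simp
qed

lemma line_two_points:
  assumes l: "pg_line l" and "pg_point X" "pg_point Y" "X \<noteq> Y" "X \<subseteq> l" "Y \<subseteq> l"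
  shows "l = vec.span (X \<union> Y)"
proof -
  have 1: "pg_line (vec.span (X \<union> Y))" using span_line assms by blast
  have "vec.span (X \<union> Y) \<subseteq> l" using assms by (intro vec.span_minimal) (auto simp: pg_subspace_def)
  then show ?thesis using sub_eq[of "vec.span (X \<union> Y)" l] 1 l by (auto simp: pg_subspace_def)
qed

lemma ext_line:
  assumes Z: "vec.subspace Z" and P: "pg_point P" "P \<subseteq> Z" and d: "2 \<le> vec.dim Z"
  shows "\<exists>k. pg_line k \<and> P \<subseteq> k \<and> k \<subseteq> Z"
proof -
  have "\<not> Z \<subseteq> P"
  proof
    assume "Z \<subseteq> P" then have "vec.dim Z \<le> vec.dim P" by (rule vec.dim_subset)
    then show False using P d by (simp add: pg_subspace_def)
  qed
  then obtain v where v: "v \<in> Z" "v \<notin> P" by blast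
  have sP: "vec.subspace P" using P by (simp add: pg_subspace_def)
  let ?k = "vec.span (insert v P)"
  have "vec.dim ?k = 2" using v sP P by (simp add: vec.dim_insert pg_subspace_def vec.span_eq_iff[THEN iffD2])
  moreover have "P \<subseteq> ?k" by (meson subset_insertI vec.span_superset order_trans)
  moreover have "?k \<subseteq> Z" using v P Z by (intro vec.span_minimal) auto
  ultimately show ?thesis by (intro exI[of _ ?k]) (simp add: pg_subspace_def)
qed

lemma card_subspace:
  fixes S :: "('a::{field,finite} ^ 'n) set"
  assumes S: "vec.subspace S"
  shows "card S = CARD('a) ^ vec.dim S"
proof -
  obtain B where B: "B \<subseteq> S" "vec.independent B" "S \<subseteq> vec.span B" "card B = vec.dim S"
    using vec.basis_exists by blast
  have fB: "finite B" by simp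
  have spB: "vec.span B = S" using B S by (metis vec.span_minimal subset_antisym)
  let ?f = "\<lambda>c. \<Sum>v\<in>B. c v *s v"
  have "bij_betw ?f (B \<rightarrow>\<^sub>E (UNIV::'a set)) S"
  proof (rule bij_betwI')
    fix c d :: "('a ^ 'n) \<Rightarrow> 'a" assume c: "c \<in> B \<rightarrow>\<^sub>E UNIV" and d: "d \<in> B \<rightarrow>\<^sub>E UNIV"
    show "(?f c = ?f d) = (c = d)"
    proof
      assume "?f c = ?f d"
      then have z: "(\<Sum>v\<in>B. (c v - d v) *s v) = 0"
        by (simp add: vec.scale_left_diff_distrib sum_subtractf)
      moreover have ind: "\<forall>e. (\<Sum>v\<in>B. e v *s v) = 0 \<longrightarrow> (\<forall>v\<in>B. e v = 0)"
        using B(2) vec.independent_explicit[of B] by simp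
      have "\<forall>v\<in>B. c v - d v = 0" using spec[OF ind, of "\<lambda>v. c v - d v"] z by blast
      then show "c = d" using c d by (auto simp: PiE_def extensional_def fun_eq_iff)
    qed simp
  next
    fix c :: "('a ^ 'n) \<Rightarrow> 'a" assume "c \<in> B \<rightarrow>\<^sub>E UNIV"
    show "?f c \<in> S" using spB[symmetric] vec.span_finite[OF fB] by auto
  next
    fix y assume "y \<in> S"
    then obtain u where "y = (\<Sum>v\<in>B. u v *s v)" using spB vec.span_finite[OF fB] by auto
    then show "\<exists>c\<in>B \<rightarrow>\<^sub>E UNIV. y = ?f c"
      by (intro bexI[of _ "restrict u B"]) auto
  qed
  then have "card S = card (B \<rightarrow>\<^sub>E (UNIV::'a set))" by (simp add: bij_betw_same_card)
  also have "\<dots> = CARD('a) ^ card B" by (simp add: card_PiE fB)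
  finally show ?thesis using B by simp
qed




definition Lp :: "('a::field ^ 'n) set set \<Rightarrow> ('a ^ 'n) set \<Rightarrow> ('a ^ 'n) set set"
  where "Lp L X = {l\<in>L. X \<subseteq> l}"
definition Lin :: "('a::field ^ 'n) set set \<Rightarrow> ('a ^ 'n) set \<Rightarrow> ('a ^ 'n) set set"
  where "Lin L S = {l\<in>L. l \<subseteq> S}"

lemma same_dim_sub:
  "pg_subspace k l \<Longrightarrow> pg_subspace k a \<Longrightarrow> l \<subseteq> a \<Longrightarrow> l = a"
  unfolding pg_subspace_def by (metis sub_eq order_refl)

lemma card_ge2: "finite S \<Longrightarrow> a \<in> S \<Longrightarrow> b \<in> S \<Longrightarrow> a \<noteq> b \<Longrightarrow> 2 \<le> card S"
  using card_mono[of S "{a,b}"] by auto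

lemma q_ge2: "2 \<le> CARD('a::{field,finite})"
proof -
  have "card {0::'a, 1} \<le> CARD('a)" by (rule card_mono) auto
  then show ?thesis by simp
qed

locale cfg =
  fixes L :: "('a::{field,finite} ^ 'n) set set"
  assumes lines: "\<forall>l\<in>L. pg_line l" and Pt: "cond_Pt L" and Pl: "cond_Pl L" and Sd: "cond_Sd L"
begin


lemma lineL: "l \<in> L \<Longrightarrow> pg_line l" using lines by blast

lemma plane_card:
  assumes "pg_plane \<pi>" "a \<in> L" "b \<in> L" "a \<noteq> b" "a \<subseteq> \<pi>" "b \<subseteq> \<pi>"
  shows "card (Lin L \<pi>) = CARD('a) + 1"
proof -
  have "2 \<le> card (Lin L \<pi>)" using assms by (intro card_ge2[of _ a b]) (auto simp: Lin_def)
  moreover have "card (Lin L \<pi>) \<in> {0, 1, CARD('a) + 1}" using Pl assms(1) by (auto simp: cond_Pl_def Lin_def)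
  ultimately show ?thesis by auto
qed

lemma point_card:
  assumes "pg_point X" "a \<in> L" "X \<subseteq> a"
  shows "card (Lp L X) = CARD('a) + 1"
proof -
  have "a \<in> Lp L X" using assms by (auto simp: Lp_def)
  then have "card (Lp L X) \<noteq> 0" by auto
  moreover have "card (Lp L X) \<in> {0, CARD('a) + 1}" using Pt assms(1) by (auto simp: cond_Pt_def Lp_def)
  ultimately show ?thesis by auto
qed

lemma solid_le: "pg_solid S \<Longrightarrow> card (Lin L S) \<le> 2 * CARD('a) + 1"
proof -
  assume "pg_solid S"
  then have "card (Lin L S) \<in> {0, 1, CARD('a) + 1, 2 * CARD('a) + 1}" using Sd unfolding cond_Sd_def Lin_def by blast
  then show ?thesis by auto
qed

lemma pencil:
  assumes X: "pg_point X" and ab: "a \<in> L" "b \<in> L" "a \<noteq> b" "X \<subseteq> a" "X \<subseteq> b"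
  shows "pg_plane (vec.span (a \<union> b))" "Lp L X = Lin L (vec.span (a \<union> b))"
    "card (Lp L X) = CARD('a) + 1"
proof -
  define \<pi> where "\<pi> = vec.span (a \<union> b)"
  have la: "pg_line a" and lb: "pg_line b" using ab lineL by auto
  have sX: "vec.subspace X" "vec.dim X = 1" using X by (auto simp: pg_subspace_def)
  have pl: "pg_plane \<pi>" using meet(2)[OF la lb ab(3) sX ab(4,5)] by (simp add: \<pi>_def numeral_2_eq_2)
  then show "pg_plane (vec.span (a \<union> b))" by (simp add: \<pi>_def)
  have api: "a \<subseteq> \<pi>" "b \<subseteq> \<pi>" unfolding \<pi>_def using vec.span_superset by blast+
  have cpi: "card (Lin L \<pi>) = CARD('a) + 1" using plane_card[OF pl ab(1,2,3) api] .
  have cX: "card (Lp L X) = CARD('a) + 1" using point_card[OF X ab(1,4)] .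
  show "card (Lp L X) = CARD('a) + 1" by (rule cX)
  have sub: "Lp L X \<subseteq> Lin L \<pi>"
  proof
    fix m assume "m \<in> Lp L X"
    then have m: "m \<in> L" "X \<subseteq> m" by (auto simp: Lp_def)
    show "m \<in> Lin L \<pi>"
    proof (rule ccontr)
      assume "m \<notin> Lin L \<pi>"
      then have nm: "\<not> m \<subseteq> \<pi>" using m by (auto simp: Lin_def)
      have lm: "pg_line m" using m lineL by auto
      have ma: "a \<noteq> m" "b \<noteq> m" using nm api by auto
      have spi: "vec.subspace \<pi>" "vec.dim \<pi> = 3" using pl by (auto simp: pg_subspace_def)
      have sm: "vec.subspace m" "vec.dim m = 2" using lm by (auto simp: pg_subspace_def)
      have sI: "vec.subspace (\<pi> \<inter> m)" using spi sm vec.subspace_inter by blast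
      have "vec.dim (\<pi> \<inter> m) \<le> 1"
      proof (rule ccontr)
        assume "\<not> ?thesis"
        then have "\<pi> \<inter> m = m" using sub_eq[OF sI sm(1)] sm by auto
        then show False using nm by auto
      qed
      moreover have "vec.dim X \<le> vec.dim (\<pi> \<inter> m)"
        using m api ab by (intro vec.dim_subset) auto
      ultimately have "vec.dim (\<pi> \<inter> m) = 1" using sX by auto
      then have "vec.dim (vec.span (\<pi> \<union> m)) = 4" using dim_join[OF spi(1) sm(1)] spi sm by simp
      then have solid: "pg_solid (vec.span (\<pi> \<union> m))" by (simp add: pg_subspace_def)
      define S where "S = vec.span (\<pi> \<union> m)"
      define \<alpha> where "\<alpha> = vec.span (a \<union> m)"
      define \<beta> where "\<beta> = vec.span (b \<union> m)"
      have pa: "pg_plane \<alpha>" using meet(2)[OF la lm ma(1) sX ab(4) m(2)] by (simp add: \<alpha>_def numeral_2_eq_2)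
      have pb: "pg_plane \<beta>" using meet(2)[OF lb lm ma(2) sX ab(5) m(2)] by (simp add: \<beta>_def numeral_2_eq_2)
      have inS: "\<pi> \<subseteq> S" "m \<subseteq> S" unfolding S_def using vec.span_superset by blast+
      have "\<alpha> \<subseteq> S" "\<beta> \<subseteq> S" unfolding \<alpha>_def \<beta>_def S_def
        using api inS by (intro vec.span_minimal; auto simp: S_def)+
      have am: "a \<subseteq> \<alpha>" "m \<subseteq> \<alpha>" "b \<subseteq> \<beta>" "m \<subseteq> \<beta>" unfolding \<alpha>_def \<beta>_def using vec.span_superset by blast+
      have pia: "\<pi> \<noteq> \<alpha>" "\<pi> \<noteq> \<beta>" using nm am by auto
      have ab_ne: "\<alpha> \<noteq> \<beta>"
      proof
        assume "\<alpha> = \<beta>"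
        then have "\<pi> \<subseteq> \<alpha>" unfolding \<pi>_def using am pa by (intro vec.span_minimal) (auto simp: pg_subspace_def)
        then have "\<pi> = \<alpha>" using same_dim_sub[OF pl pa] by simp
        then show False using pia by simp
      qed
      have sa: "vec.subspace a" "vec.dim a = 2" using la by (auto simp: pg_subspace_def)
      have sb: "vec.subspace b" "vec.dim b = 2" using lb by (auto simp: pg_subspace_def)
      have i1: "\<pi> \<inter> \<alpha> = a" using meet(1)[OF pl pa pia(1)] sa api am by simp
      have i2: "\<pi> \<inter> \<beta> = b" using meet(1)[OF pl pb pia(2)] sb api am by simp
      have i3: "\<alpha> \<inter> \<beta> = m" using meet(1)[OF pa pb ab_ne] sm am by simp
      have ca: "card (Lin L \<alpha>) = CARD('a) + 1" using plane_card[OF pa ab(1) m(1) ma(1)] am by simp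
      have cb: "card (Lin L \<beta>) = CARD('a) + 1" using plane_card[OF pb ab(2) m(1) ma(2)] am by simp
      have I1: "Lin L \<pi> \<inter> Lin L \<alpha> \<subseteq> {a}"
      proof
        fix l assume "l \<in> Lin L \<pi> \<inter> Lin L \<alpha>"
        then have "l \<in> L" "l \<subseteq> a" using i1 by (auto simp: Lin_def)
        then show "l \<in> {a}" using same_dim_sub[OF lineL[of l] la] by simp
      qed
      have I2: "(Lin L \<pi> \<union> Lin L \<alpha>) \<inter> Lin L \<beta> \<subseteq> {b, m}"
      proof -
        have "Lin L \<pi> \<inter> Lin L \<beta> \<subseteq> {b}"
        proof
          fix l assume "l \<in> Lin L \<pi> \<inter> Lin L \<beta>"
          then have "l \<in> L" "l \<subseteq> b" using i2 by (auto simp: Lin_def)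
          then show "l \<in> {b}" using same_dim_sub[OF lineL[of l] lb] by simp
        qed
        moreover have "Lin L \<alpha> \<inter> Lin L \<beta> \<subseteq> {m}"
        proof
          fix l assume "l \<in> Lin L \<alpha> \<inter> Lin L \<beta>"
          then have "l \<in> L" "l \<subseteq> m" using i3 by (auto simp: Lin_def)
          then show "l \<in> {m}" using same_dim_sub[OF lineL[of l] lm] by simp
        qed
        ultimately show ?thesis by blast
      qed
      have c1: "card (Lin L \<pi> \<inter> Lin L \<alpha>) \<le> 1" using card_mono[OF _ I1] by simp
      have c2: "card ((Lin L \<pi> \<union> Lin L \<alpha>) \<inter> Lin L \<beta>) \<le> 2"
      proof -
        have "card {b, m} \<le> 2" by (cases "b = m") auto
        then show ?thesis using card_mono[OF _ I2] by simp
      qed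
      have u1: "card (Lin L \<pi> \<union> Lin L \<alpha>) + card (Lin L \<pi> \<inter> Lin L \<alpha>) = 2 * CARD('a) + 2"
        using card_Un_Int[of "Lin L \<pi>" "Lin L \<alpha>"] cpi ca by simp
      have u2: "card (Lin L \<pi> \<union> Lin L \<alpha> \<union> Lin L \<beta>) + card ((Lin L \<pi> \<union> Lin L \<alpha>) \<inter> Lin L \<beta>)
          = card (Lin L \<pi> \<union> Lin L \<alpha>) + (CARD('a) + 1)"
        using card_Un_Int[of "Lin L \<pi> \<union> Lin L \<alpha>" "Lin L \<beta>"] cb by simp
      have "Lin L \<pi> \<union> Lin L \<alpha> \<union> Lin L \<beta> \<subseteq> Lin L S"
        using inS \<open>\<alpha> \<subseteq> S\<close> \<open>\<beta> \<subseteq> S\<close> by (auto simp: Lin_def)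
      then have "card (Lin L \<pi> \<union> Lin L \<alpha> \<union> Lin L \<beta>) \<le> card (Lin L S)" by (rule card_mono[rotated]) simp
      moreover have "card (Lin L S) \<le> 2 * CARD('a) + 1" using solid_le solid by (simp add: S_def)
      ultimately show False using u1 u2 c1 c2 q_ge2[where 'a='a] by linarith
    qed
  qed
  show "Lp L X = Lin L (vec.span (a \<union> b))"
    using card_subset_eq[OF _ sub] cX cpi by (simp add: \<pi>_def)
qed

end



lemma count_lines:
  fixes X :: "('a::{field,finite} ^ 'n) set"
  assumes pl: "pg_plane \<pi>" and X: "pg_point X" "X \<subseteq> \<pi>"
  shows "card {l. pg_line l \<and> X \<subseteq> l \<and> l \<subseteq> \<pi>} \<le> CARD('a) + 1"
proof -
  define q where "q = CARD('a)"
  define M where "M = {l. pg_line l \<and> X \<subseteq> l \<and> l \<subseteq> \<pi>}"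
  have q2: "2 \<le> q" using q_ge2 by (simp add: q_def)
  have "q \<le> q^2" by (simp add: power2_eq_square)
  then obtain r where r: "q^2 = q + r" using le_Suc_ex by blast
  have rpos: "0 < r"
  proof -
    have "q * 2 \<le> q * q" by (rule mult_le_mono2[OF q2])
    moreover have "q * q = q + r" using r by (simp add: power2_eq_square)
    ultimately show ?thesis using q2 by linarith
  qed
  have cX: "card X = q" using card_subspace[of X] X by (simp add: pg_subspace_def q_def)
  have cl: "card (l - X) = r" if "l \<in> M" for l
  proof -
    have "card l = q^2" using card_subspace[of l] that by (simp add: M_def pg_subspace_def q_def power2_eq_square)
    moreover have "X \<subseteq> l" using that by (simp add: M_def)
    ultimately show ?thesis using card_Diff_subset[of X l] cX r by simp
  qed
  have disj: "(l - X) \<inter> (l' - X) = {}" if "l \<in> M" "l' \<in> M" "l \<noteq> l'" for l l'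
  proof -
    have "l \<inter> l' = X" using meet(1)[of 1 l l' X] that X by (simp add: M_def pg_subspace_def)
    then show ?thesis by blast
  qed
  have "card (\<Union>l\<in>M. l - X) = (\<Sum>l\<in>M. card (l - X))"
  proof (rule card_UN_disjoint)
    show "finite M" by simp
    show "\<forall>i\<in>M. finite (i - X)" by simp
    show "\<forall>i\<in>M. \<forall>j\<in>M. i \<noteq> j \<longrightarrow> (i - X) \<inter> (j - X) = {}" using disj by blast
  qed
  also have "\<dots> = card M * r" using cl by simp
  finally have cU: "card (\<Union>l\<in>M. l - X) = card M * r" .
  have "(\<Union>l\<in>M. l - X) \<subseteq> \<pi> - X" by (auto simp: M_def)
  then have "card (\<Union>l\<in>M. l - X) \<le> card (\<pi> - X)" by (intro card_mono) simp_all
  then have "card M * r \<le> card (\<pi> - X)" using cU by simp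
  also have "card (\<pi> - X) = q^3 - q"
    using card_subspace[of \<pi>] pl X card_Diff_subset[of X \<pi>] cX by (simp add: pg_subspace_def q_def power3_eq_cube)
  also have "q^3 - q = (q + 1) * r"
  proof -
    have "q^3 = q * q^2" by (simp add: power3_eq_cube power2_eq_square)
    then have "q^3 = q * q + q * r" using r by (simp add: algebra_simps)
    then show ?thesis using r by (simp add: algebra_simps power2_eq_square)
  qed
  finally have "card M * r \<le> (q + 1) * r" .
  then have "card M \<le> q + 1" using rpos mult_le_cancel2 by blast
  then show ?thesis by (simp add: M_def q_def)
qed

context cfg begin

lemma fullpencil:
  assumes X: "pg_point X" and ab: "a \<in> L" "b \<in> L" "a \<noteq> b" "X \<subseteq> a" "X \<subseteq> b"
    and k: "pg_line k" "X \<subseteq> k" "k \<subseteq> vec.span (a \<union> b)"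
  shows "k \<in> L"
proof -
  define \<pi> where "\<pi> = vec.span (a \<union> b)"
  have pl: "pg_plane \<pi>" and eq: "Lp L X = Lin L \<pi>" and c: "card (Lp L X) = CARD('a) + 1"
    using pencil[OF assms(1-6)] by (auto simp: \<pi>_def)
  have Xpi: "X \<subseteq> \<pi>" using ab unfolding \<pi>_def using vec.span_superset by blast
  have sub: "Lp L X \<subseteq> {l. pg_line l \<and> X \<subseteq> l \<and> l \<subseteq> \<pi>}"
    using eq lineL by (auto simp: Lp_def Lin_def)
  have "Lp L X = {l. pg_line l \<and> X \<subseteq> l \<and> l \<subseteq> \<pi>}"
    using card_seteq[OF _ sub] count_lines[OF pl X Xpi] c by simp
  then show ?thesis using k by (auto simp: Lp_def \<pi>_def)
qed

end



lemma join2: "pg_join [X, Y] = vec.span (X \<union> Y)" by (simp add: pg_join_def)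
lemma join2c: "pg_join [X, Y] = pg_join [Y, X]" by (simp add: pg_join_def Un_commute)

lemma pentagon_rev:
  assumes "pentagon L A B C D E" shows "pentagon L A E D C B"
proof -
  have l: "[pg_join [A,E], pg_join [E,D], pg_join [D,C], pg_join [C,B], pg_join [B,A]]
     = rev [pg_join [A,B], pg_join [B,C], pg_join [C,D], pg_join [D,E], pg_join [E,A]]"
    by (simp only: join2c[of A E] join2c[of E D] join2c[of D C] join2c[of C B] join2c[of B A] rev.simps append.simps)
  have d: "[A,E,D,C,B] = rev (rotate1 [A,B,C,D,E])" by simp
  show ?thesis using assms unfolding pentagon_def l d set_rev distinct_rev distinct1_rotate by blast
qed



lemma point_span1:
  assumes "pg_point X" shows "\<exists>x. X = vec.span {x}"
proof -
  obtain B where B: "B \<subseteq> X" "vec.independent B" "X \<subseteq> vec.span B" "card B = vec.dim X"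
    using vec.basis_exists by blast
  then obtain x where "B = {x}" using assms by (auto simp: pg_subspace_def card_1_singleton_iff)
  moreover have "vec.span B \<subseteq> X" using B assms by (intro vec.span_minimal) (auto simp: pg_subspace_def)
  ultimately show ?thesis using B by blast
qed

lemma dim5:
  assumes "pg_point A" "pg_point B" "pg_point C" "pg_point D" "pg_point E"
  shows "vec.dim (vec.span (A \<union> (B \<union> (C \<union> (D \<union> E))))) \<le> 5"
proof -
  obtain a b c d e where ab: "A = vec.span {a}" "B = vec.span {b}" "C = vec.span {c}"
    "D = vec.span {d}" "E = vec.span {e}" using point_span1 assms by metis
  have "A \<union> (B \<union> (C \<union> (D \<union> E))) \<subseteq> vec.span (set [a,b,c,d,e])"
    unfolding ab by (intro Un_least vec.span_mono) auto
  then have "vec.span (A \<union> (B \<union> (C \<union> (D \<union> E)))) \<subseteq> vec.span (set [a,b,c,d,e])"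
    by (intro vec.span_minimal) auto
  then have "vec.dim (vec.span (A \<union> (B \<union> (C \<union> (D \<union> E))))) \<le> card (set [a,b,c,d,e])"
    by (intro vec.dim_le_card) auto
  also have "\<dots> \<le> 5" using card_length[of "[a,b,c,d,e]"] by simp
  finally show ?thesis .
qed



context cfg begin

lemma two_pencils:
  assumes p1: "pg_plane \<pi>1" and p2: "pg_plane \<pi>2" and ne: "\<pi>1 \<noteq> \<pi>2" and c: "c \<in> L" "c \<subseteq> \<pi>1" "c \<subseteq> \<pi>2"
    and c1: "card (Lin L \<pi>1) = CARD('a) + 1" and c2: "card (Lin L \<pi>2) = CARD('a) + 1"
  shows "pg_solid (vec.span (\<pi>1 \<union> \<pi>2))" "Lin L (vec.span (\<pi>1 \<union> \<pi>2)) = Lin L \<pi>1 \<union> Lin L \<pi>2"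
proof -
  have lc: "pg_line c" using c lineL by auto
  have sc: "vec.subspace c" "vec.dim c = 2" using lc by (auto simp: pg_subspace_def)
  have i: "\<pi>1 \<inter> \<pi>2 = c" using meet(1)[OF p1 p2 ne] sc c by simp
  show sol: "pg_solid (vec.span (\<pi>1 \<union> \<pi>2))" using meet(2)[OF p1 p2 ne] sc c by (simp add: numeral_3_eq_3)
  have I: "Lin L \<pi>1 \<inter> Lin L \<pi>2 \<subseteq> {c}"
  proof
    fix l assume "l \<in> Lin L \<pi>1 \<inter> Lin L \<pi>2"
    then have "l \<in> L" "l \<subseteq> c" using i by (auto simp: Lin_def)
    then show "l \<in> {c}" using same_dim_sub[OF lineL[of l] lc] by simp
  qed
  have "card (Lin L \<pi>1 \<inter> Lin L \<pi>2) \<le> 1" using card_mono[OF _ I] by simp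
  then have cu: "2 * CARD('a) + 1 \<le> card (Lin L \<pi>1 \<union> Lin L \<pi>2)"
    using card_Un_Int[of "Lin L \<pi>1" "Lin L \<pi>2"] c1 c2 by simp
  have sub: "Lin L \<pi>1 \<union> Lin L \<pi>2 \<subseteq> Lin L (vec.span (\<pi>1 \<union> \<pi>2))"
    using vec.span_superset[of "\<pi>1 \<union> \<pi>2"] by (auto simp: Lin_def)
  have "card (Lin L (vec.span (\<pi>1 \<union> \<pi>2))) \<le> 2 * CARD('a) + 1" using solid_le[OF sol] .
  then show "Lin L (vec.span (\<pi>1 \<union> \<pi>2)) = Lin L \<pi>1 \<union> Lin L \<pi>2"
    using card_seteq[OF _ sub] cu by simp
qed

end



locale pent = cfg L for L :: "('a::{field,finite} ^ 'n) set set" +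
  fixes A B C D E :: "('a ^ 'n) set"
  assumes pent: "pentagon L A B C D E"
begin

lemma pts: "pg_point A" "pg_point B" "pg_point C" "pg_point D" "pg_point E"
  and dst: "A \<noteq> B" "A \<noteq> C" "A \<noteq> D" "A \<noteq> E" "B \<noteq> C" "B \<noteq> D" "B \<noteq> E" "C \<noteq> D" "C \<noteq> E" "D \<noteq> E"
  and inL: "vec.span (A \<union> B) \<in> L" "vec.span (B \<union> C) \<in> L" "vec.span (C \<union> D) \<in> L"
     "vec.span (D \<union> E) \<in> L" "vec.span (E \<union> A) \<in> L"
  and ldst: "vec.span (A \<union> B) \<noteq> vec.span (B \<union> C)" "vec.span (A \<union> B) \<noteq> vec.span (E \<union> A)"
     "vec.span (B \<union> C) \<noteq> vec.span (C \<union> D)" "vec.span (C \<union> D) \<noteq> vec.span (D \<union> E)"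
     "vec.span (D \<union> E) \<noteq> vec.span (E \<union> A)"
  using pent by (auto simp: pentagon_def join2)

lemma sp: "X \<subseteq> vec.span (X \<union> Y)" "Y \<subseteq> vec.span (X \<union> Y)"
  using vec.span_superset by blast+

lemma core:
  assumes P: "pg_point P" "P \<subseteq> vec.span (B \<union> E)" "P \<noteq> B" "P \<noteq> E"
    and k: "k \<in> L" "P \<subseteq> k" "C \<subseteq> k"
  shows False
proof -
  define ab where "ab = vec.span (A \<union> B)"
  define bc where "bc = vec.span (B \<union> C)"
  define ea where "ea = vec.span (E \<union> A)"
  define be where "be = vec.span (B \<union> E)"
  define \<pi>A where "\<pi>A = vec.span (ab \<union> ea)"
  define \<pi>B where "\<pi>B = vec.span (ab \<union> bc)"
  have L: "ab \<in> L" "bc \<in> L" "ea \<in> L" using inL by (auto simp: ab_def bc_def ea_def)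
  have ne: "ab \<noteq> bc" "ab \<noteq> ea" using ldst by (auto simp: ab_def bc_def ea_def)
  have inc: "A \<subseteq> ab" "B \<subseteq> ab" "B \<subseteq> bc" "C \<subseteq> bc" "E \<subseteq> ea" "A \<subseteq> ea" "B \<subseteq> be" "E \<subseteq> be"
    by (auto simp: ab_def bc_def ea_def be_def intro: vec.span_base)
  have inc2: "ab \<subseteq> \<pi>A" "ea \<subseteq> \<pi>A" "ab \<subseteq> \<pi>B" "bc \<subseteq> \<pi>B" by (auto simp: \<pi>A_def \<pi>B_def intro: vec.span_base)
  note penA = pencil[OF pts(1) L(1) L(3) ne(2) inc(1) inc(6), folded \<pi>A_def]
  note penB = pencil[OF pts(2) L(1) L(2) ne(1) inc(2) inc(3), folded \<pi>B_def]
  have lk: "pg_line k" using k lineL by auto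
  have beL: "be \<notin> L"
  proof
    assume beL: "be \<in> L"
    have "be \<noteq> ab"
    proof
      assume "be = ab"
      then have "E \<subseteq> ab" using inc by simp
      then have "ab = ea" using line_two_points[OF lineL[OF L(1)] pts(5) pts(1) dst(4)[symmetric]] inc
        by (simp add: ea_def)
      then show False using ne by simp
    qed
    note pen = pencil[OF pts(2) L(1) beL this[symmetric] inc(2) inc(7)]
    have "ea \<subseteq> vec.span (ab \<union> be)" unfolding ea_def using inc
      by (intro vec.span_minimal) (auto intro: vec.span_base)
    then have "ea \<in> Lp L B" using pen(2) L by (auto simp: Lin_def)
    then have "B \<subseteq> ea" by (simp add: Lp_def)
    then have "ea = ab" using line_two_points[OF lineL[OF L(3)] pts(1) pts(2) dst(1)] inc
      by (simp add: ab_def)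
    then show False using ne by simp
  qed
  have pAB: "\<pi>A \<noteq> \<pi>B"
  proof
    assume "\<pi>A = \<pi>B"
    then have "bc \<in> Lp L A" using penA(2) penB(2) L inc by (auto simp: Lp_def Lin_def)
    then have "A \<subseteq> bc" by (simp add: Lp_def)
    then have "bc = ab" using line_two_points[OF lineL[OF L(2)] pts(1) pts(2) dst(1)] inc
      by (simp add: ab_def)
    then show False using ne by simp
  qed
  have CA: "\<not> C \<subseteq> \<pi>A"
  proof
    assume "C \<subseteq> \<pi>A"
    then have "bc \<subseteq> \<pi>A" unfolding bc_def using inc inc2 penA(1)
      by (intro vec.span_minimal) (auto simp: pg_subspace_def)
    then have "\<pi>B \<subseteq> \<pi>A" unfolding \<pi>B_def using inc2 penA(1)
      by (intro vec.span_minimal) (auto simp: pg_subspace_def)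
    then show False using same_dim_sub[OF penB(1) penA(1)] pAB by simp
  qed
  have cA: "card (Lin L \<pi>A) = CARD('a) + 1" using penA by simp
  have cB: "card (Lin L \<pi>B) = CARD('a) + 1" using penB by simp
  note T = two_pencils[OF penA(1) penB(1) pAB L(1) inc2(1) inc2(3) cA cB]
  have beA: "be \<subseteq> \<pi>A" unfolding be_def using inc inc2 penA(1)
    by (intro vec.span_minimal) (auto simp: pg_subspace_def)
  have PA: "P \<subseteq> \<pi>A" using beA P by (simp add: be_def)
  have PC: "P \<noteq> C" using PA CA by auto
  have keq: "k = vec.span (P \<union> C)" using line_two_points[OF lk P(1) pts(3) PC k(2) k(3)] .
  have "P \<union> C \<subseteq> vec.span (\<pi>A \<union> \<pi>B)" using PA inc(4) inc2(4)
    by (blast intro: vec.span_base)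
  then have "k \<subseteq> vec.span (\<pi>A \<union> \<pi>B)" unfolding keq
    by (intro vec.span_minimal) auto
  then have "k \<in> Lin L \<pi>A \<union> Lin L \<pi>B" using T(2) k by (auto simp: Lin_def)
  then show False
  proof
    assume "k \<in> Lin L \<pi>A"
    then show False using CA k by (auto simp: Lin_def)
  next
    assume "k \<in> Lin L \<pi>B"
    then have "B \<subseteq> k" using penB(2) by (auto simp: Lp_def)
    then have "k = vec.span (P \<union> B)" using line_two_points[OF lk P(1) pts(2) P(3) k(2)] by simp
    moreover have "be = vec.span (P \<union> B)"
      using line_two_points[OF span_line[OF pts(2) pts(5) dst(7)] P(1) pts(2) P(3)] P inc
      by (simp add: be_def)
    ultimately show False using beL k by simp
  qed
qed

end



context cfg begin

lemma qU_vertex: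
  assumes X: "pg_point X" and ab: "a \<in> L" "b \<in> L" "a \<noteq> b" "X \<subseteq> a" "X \<subseteq> b"
    and U: "vec.subspace U" "a \<subseteq> U" "b \<subseteq> U"
  shows "qU_point L U X"
proof -
  note pen = pencil[OF X ab]
  have piU: "vec.span (a \<union> b) \<subseteq> U" using U by (intro vec.span_minimal) auto
  have "{l \<in> L. X \<subseteq> l \<and> l \<subseteq> U} = Lp L X"
    using pen(2) piU by (auto simp: Lp_def Lin_def)
  then show ?thesis using pen(3) X by (simp add: qU_point_def)
qed

end

context pent begin

lemma rev_pent: "pent L A E D C B"
  using pentagon_rev[OF pent] by (intro pent.intro cfg_axioms pent_axioms.intro)

lemma main: "{P. P \<subseteq> pg_join [B, E] \<and> qU_point L (pg_join [A, B, C, D, E]) P} = {B, E}"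
proof -
  define U where "U = vec.span (A \<union> (B \<union> (C \<union> (D \<union> E))))"
  have Ueq: "pg_join [A, B, C, D, E] = U" by (simp add: pg_join_def U_def)
  have sU: "vec.subspace U" by (simp add: U_def)
  have vU: "A \<subseteq> U" "B \<subseteq> U" "C \<subseteq> U" "D \<subseteq> U" "E \<subseteq> U"
    by (auto simp: U_def intro: vec.span_base)
  define ab where "ab = vec.span (A \<union> B)"
  define bc where "bc = vec.span (B \<union> C)"
  define cd where "cd = vec.span (C \<union> D)"
  define de where "de = vec.span (D \<union> E)"
  define ea where "ea = vec.span (E \<union> A)"
  define be where "be = vec.span (B \<union> E)"
  have L: "ab \<in> L" "bc \<in> L" "cd \<in> L" "de \<in> L" "ea \<in> L" using inL by (auto simp: ab_def bc_def cd_def de_def ea_def)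
  have ne: "ab \<noteq> bc" "bc \<noteq> cd" "cd \<noteq> de" "de \<noteq> ea" using ldst by (auto simp: ab_def bc_def cd_def de_def ea_def)
  have inc: "A \<subseteq> ab" "B \<subseteq> ab" "B \<subseteq> bc" "C \<subseteq> bc" "C \<subseteq> cd" "D \<subseteq> cd" "D \<subseteq> de" "E \<subseteq> de"
     "E \<subseteq> ea" "A \<subseteq> ea"
    by (auto simp: ab_def bc_def cd_def de_def ea_def intro: vec.span_base)
  have lU0: "ab \<subseteq> U" unfolding ab_def using vU sU by (intro vec.span_minimal) auto
  have lU1: "bc \<subseteq> U" unfolding bc_def using vU sU by (intro vec.span_minimal) auto
  have lU2: "cd \<subseteq> U" unfolding cd_def using vU sU by (intro vec.span_minimal) auto
  have lU3: "de \<subseteq> U" unfolding de_def using vU sU by (intro vec.span_minimal) auto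
  have lU4: "ea \<subseteq> U" unfolding ea_def using vU sU by (intro vec.span_minimal) auto
  note lU = lU0 lU1 lU2 lU3 lU4
  have beq: "pg_join [B, E] = be" by (simp add: pg_join_def be_def)
  have qB: "qU_point L U B" using qU_vertex[OF pts(2) L(1) L(2) ne(1) inc(2) inc(3) sU lU(1) lU(2)] .
  have qE: "qU_point L U E" using qU_vertex[OF pts(5) L(4) L(5) ne(4) inc(8) inc(9) sU lU(4) lU(5)] .
  have Bbe: "B \<subseteq> be" "E \<subseteq> be" by (auto simp: be_def intro: vec.span_base)
  have "P = B \<or> P = E" if P: "P \<subseteq> be" "qU_point L U P" for P
  proof (rule ccontr)
    assume nPBE: "\<not> (P = B \<or> P = E)"
    define M where "M = {l \<in> L. P \<subseteq> l \<and> l \<subseteq> U}"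
    have pP: "pg_point P" and cM: "card M = CARD('a) + 1" using P by (auto simp: qU_point_def M_def)
    have "2 \<le> card M" using cM q_ge2[where 'a='a] by simp
    then obtain l1 where l1: "l1 \<in> M" by fastforce
    have "card (M - {l1}) \<noteq> 0" using \<open>2 \<le> card M\<close> l1 by simp
    then have "M - {l1} \<noteq> {}" by (metis card.empty)
    then obtain l2 where l2: "l2 \<in> M" "l2 \<noteq> l1" by blast
    have l1': "l1 \<in> L" "P \<subseteq> l1" "l1 \<subseteq> U" and l2': "l2 \<in> L" "P \<subseteq> l2" "l2 \<subseteq> U"
      using l1 l2 by (auto simp: M_def)
    define \<pi>P where "\<pi>P = vec.span (l1 \<union> l2)"
    have plP: "pg_plane \<pi>P" using pencil(1)[OF pP l1'(1) l2'(1) l2(2)[symmetric] l1'(2) l2'(2)] by (simp add: \<pi>P_def)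
    have PU: "\<pi>P \<subseteq> U" unfolding \<pi>P_def using l1' l2' sU by (intro vec.span_minimal) auto
    define \<pi>C where "\<pi>C = vec.span (bc \<union> cd)"
    define \<pi>D where "\<pi>D = vec.span (cd \<union> de)"
    note penC = pencil[OF pts(3) L(2) L(3) ne(2) inc(4) inc(5), folded \<pi>C_def]
    note penD = pencil[OF pts(4) L(3) L(4) ne(3) inc(6) inc(7), folded \<pi>D_def]
    have inc2: "bc \<subseteq> \<pi>C" "cd \<subseteq> \<pi>C" "cd \<subseteq> \<pi>D" "de \<subseteq> \<pi>D"
      by (auto simp: \<pi>C_def \<pi>D_def intro: vec.span_base)
    have pCD: "\<pi>C \<noteq> \<pi>D"
    proof
      assume "\<pi>C = \<pi>D"
      then have "de \<in> Lp L C" using penC(2) penD(2) L inc by (auto simp: Lp_def Lin_def)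
      then have "C \<subseteq> de" by (simp add: Lp_def)
      then have "de = cd" using line_two_points[OF lineL[OF L(4)] pts(3) pts(4) dst(8)] inc
        by (simp add: cd_def)
      then show False using ne by simp
    qed
    have cC: "card (Lin L \<pi>C) = CARD('a) + 1" using penC by simp
    have cD: "card (Lin L \<pi>D) = CARD('a) + 1" using penD by simp
    define W where "W = vec.span (\<pi>C \<union> \<pi>D)"
    note Wf = two_pencils[OF penC(1) penD(1) pCD L(3) inc2(2) inc2(3) cC cD, folded W_def]
    have CU1: "\<pi>C \<subseteq> U" unfolding \<pi>C_def using lU sU by (intro vec.span_minimal) auto
    have CU2: "\<pi>D \<subseteq> U" unfolding \<pi>D_def using lU sU by (intro vec.span_minimal) auto
    note CU = CU1 CU2
    have WU: "W \<subseteq> U" unfolding W_def using CU sU by (intro vec.span_minimal) auto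
    have "B \<union> E \<subseteq> W" unfolding W_def using inc(3) inc(8) inc2(1) inc2(4)
      by (blast intro: vec.span_base)
    then have beW: "be \<subseteq> W" unfolding be_def using Wf(1) by (intro vec.span_minimal) (auto simp: pg_subspace_def)
    have sP: "vec.subspace \<pi>P" "vec.dim \<pi>P = 3" using plP by (auto simp: pg_subspace_def)
    have sW: "vec.subspace W" "vec.dim W = 4" using Wf(1) by (auto simp: pg_subspace_def)
    have dU: "vec.dim U \<le> 5" using dim5[OF pts] by (simp add: U_def)
    have "vec.span (\<pi>P \<union> W) \<subseteq> U" using PU WU sU by (intro vec.span_minimal) auto
    then have "vec.dim (vec.span (\<pi>P \<union> W)) \<le> 5" using vec.dim_subset dU order_trans by blast
    then have d2: "2 \<le> vec.dim (\<pi>P \<inter> W)" using dim_join[OF sP(1) sW(1)] sP sW by linarith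
    have PZ: "P \<subseteq> \<pi>P \<inter> W" using l1' beW P unfolding \<pi>P_def by (blast intro: vec.span_base)
    obtain k where k: "pg_line k" "P \<subseteq> k" "k \<subseteq> \<pi>P \<inter> W"
      using ext_line[OF vec.subspace_inter[OF sP(1) sW(1)] pP PZ d2] by blast
    have kL: "k \<in> L" using fullpencil[OF pP l1'(1) l2'(1) l2(2)[symmetric] l1'(2) l2'(2) k(1) k(2)] k(3)
      by (simp add: \<pi>P_def)
    have "k \<in> Lin L \<pi>C \<union> Lin L \<pi>D" using Wf(2) kL k(3) by (auto simp: Lin_def)
    then have "C \<subseteq> k \<or> D \<subseteq> k" using penC(2) penD(2) by (auto simp: Lp_def)
    moreover have "P \<subseteq> vec.span (B \<union> E)" "P \<subseteq> vec.span (E \<union> B)" using P by (auto simp: be_def Un_commute)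
    ultimately show False
      using core[OF pP _ _ _ kL k(2)] pent.core[OF rev_pent pP _ _ _ kL k(2)] nPBE by blast
  qed
  then show ?thesis using qB qE Bbe unfolding Ueq beq by auto
qed

end

theorem proposition1:
  fixes L :: "('a::{field,finite} ^ 'n) set set"
    and A B C D E :: "('a ^ 'n) set"
  assumes lines: "\<forall>l\<in>L. pg_line l"
    and nonempty: "L \<noteq> {}"
    and Pt: "cond_Pt L" and Pl: "cond_Pl L" and Sd: "cond_Sd L" and To: "cond_To L"
    and pent: "pentagon L A B C D E"
  shows "{P. P \<subseteq> pg_join [B, E] \<and> qU_point L (pg_join [A, B, C, D, E]) P} = {B, E}"
proof -
  interpret pent L A B C D E
    using assms by (intro pent.intro cfg.intro pent_axioms.intro)
  show ?thesis by (rule main)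
qed



end
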